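(* Let $A=(a_{ij})\in\mathcal{B}^{m,n}$ and let $k$ be a field. Let $k[A]=k[x_{ij} : a_{ij}=1]$ and let $A[x]$ be the $m\times n$ matrix over $k[A]$ with $A[x]_{ij}=x_{ij}$ if $a_{ij}=1$ and $A[x]_{ij}=0$ if $a_{ij}=0$. Let $I_2(A)\subseteq k[A]$ be the ideal generated by all $2\times 2$ minors of $A[x]$. Then for entries $a_{ij}=a_{k\ell}=1$, the pair $\{a_{ij},a_{k\ell}\}$ is an isolated pair if and only if $x_{ij}x_{k\ell}\in I_2(A)$.
   Context: $\mathcal{B}^{m,n}$ denotes $m\times n$ matrices with entries in the Boolean semiring $\{0,1\}$ with $\vee$ (or), $\wedge$ (and). A pair of entries $\{a_{ij},a_{k\ell}\}$ of $A$ is called isolated if $a_{ij}=a_{k\ell}=1$ and $a_{i\ell}\wedge a_{kj}=0$. *)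

theory Defs
  imports Main "HOL-Library.Poly_Mapping"
begin

text \<open>Multivariate polynomials over a field k in the variables x_(i,j), represented as
  finitely supported maps from monomials (finitely supported exponent vectors) to coefficients.\<close>
type_synonym 'k mpoly = "((nat \<times> nat) \<Rightarrow>\<^sub>0 nat) \<Rightarrow>\<^sub>0 'k"

definition Var :: "nat \<times> nat \<Rightarrow> 'k::comm_ring_1 mpoly" where
  "Var v = Poly_Mapping.single (Poly_Mapping.single v 1) 1"

text \<open>Boolean m x n matrices: A i j for i < m, j < n (True = 1, False = 0).\<close>
definition isolated_pair :: "(nat \<Rightarrow> nat \<Rightarrow> bool) \<Rightarrow> nat \<Rightarrow> nat \<Rightarrow> nat \<Rightarrow> nat \<Rightarrow> bool" where
  "isolated_pair A i j k l \<longleftrightarrow> A i j \<and> A k l \<and> \<not> (A i l \<and> A k j)"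

definition kA :: "nat \<Rightarrow> nat \<Rightarrow> (nat \<Rightarrow> nat \<Rightarrow> bool) \<Rightarrow> 'k::field mpoly set" where
  "kA m n A = {p. \<forall>mo \<in> Poly_Mapping.keys p. \<forall>v \<in> Poly_Mapping.keys mo.
                    fst v < m \<and> snd v < n \<and> A (fst v) (snd v)}"

definition Ax :: "(nat \<Rightarrow> nat \<Rightarrow> bool) \<Rightarrow> nat \<Rightarrow> nat \<Rightarrow> 'k::field mpoly" where
  "Ax A i j = (if A i j then Var (i, j) else 0)"

definition minors2 :: "nat \<Rightarrow> nat \<Rightarrow> (nat \<Rightarrow> nat \<Rightarrow> bool) \<Rightarrow> 'k::field mpoly set" where
  "minors2 m n A = {Ax A i j * Ax A k l - Ax A i l * Ax A k j | i j k l.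
                      i < k \<and> k < m \<and> j < l \<and> l < n}"

definition ideal_in :: "'a::comm_ring_1 set \<Rightarrow> 'a set \<Rightarrow> 'a set" where
  "ideal_in R G = {\<Sum>g\<in>F. c g * g | F c. finite F \<and> F \<subseteq> G \<and> (\<forall>g\<in>F. c g \<in> R)}"

definition I2 :: "nat \<Rightarrow> nat \<Rightarrow> (nat \<Rightarrow> nat \<Rightarrow> bool) \<Rightarrow> 'k::field mpoly set" where
  "I2 m n A = ideal_in (kA m n A) (minors2 m n A)"

end

theory Submission imports Defs begin

definition mono :: "nat \<times> nat \<Rightarrow> nat \<times> nat \<Rightarrow> ((nat \<times> nat) \<Rightarrow>\<^sub>0 nat)" where
  "mono a b = Poly_Mapping.single a 1 + Poly_Mapping.single b 1"

lemma lookup_mono: "Poly_Mapping.lookup (mono a b) x = (if x = a then 1 else 0) + (if x = b then 1 else 0)"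
  by (simp add: mono_def lookup_add lookup_single when_def)

lemma mono_le_cases:
  assumes le: "\<And>x. Poly_Mapping.lookup (mono a b) x \<le> Poly_Mapping.lookup (mono p q) x"
  shows "(a = p \<and> b = q) \<or> (a = q \<and> b = p)"
proof -
  have ea: "(1::nat) + (if a = b then 1 else 0) \<le> (if a = p then 1 else 0) + (if a = q then 1 else 0)"
    using le[of a] unfolding lookup_mono by simp
  have eb: "(if b = a then 1 else 0) + (1::nat) \<le> (if b = p then 1 else 0) + (if b = q then 1 else 0)"
    using le[of b] unfolding lookup_mono by simp
  show ?thesis
  proof (cases "a = b")
    case True
    then have "a = p \<and> a = q" using ea by (cases "a = p"; cases "a = q"; auto)
    then show ?thesis using True by blast
  next
    case False
    have ap: "a = p \<or> a = q" using ea by (cases "a = p"; cases "a = q"; auto)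
    have bp: "b = p \<or> b = q" using eb by (cases "b = p"; cases "b = q"; auto)
    show ?thesis using ap bp False by blast
  qed
qed

lemma mono_eq_iff: "mono a b = mono p q \<longleftrightarrow> (a = p \<and> b = q) \<or> (a = q \<and> b = p)"
proof
  assume h: "mono a b = mono p q"
  show "(a = p \<and> b = q) \<or> (a = q \<and> b = p)"
    by (rule mono_le_cases) (simp add: h)
next
  assume "(a = p \<and> b = q) \<or> (a = q \<and> b = p)"
  then show "mono a b = mono p q" by (auto simp: mono_def add.commute)
qed

lemma mono_deg:
  assumes "l + mono a b = mono p q" shows "l = 0"
proof -
  have e: "\<And>x. Poly_Mapping.lookup l x + Poly_Mapping.lookup (mono a b) x = Poly_Mapping.lookup (mono p q) x"
    using assms by (metis lookup_add)
  have "\<And>x. Poly_Mapping.lookup (mono a b) x \<le> Poly_Mapping.lookup (mono p q) x"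
    using e by (metis le_add2)
  then have "mono a b = mono p q"
    unfolding mono_eq_iff by (rule mono_le_cases)
  then have "l + mono p q = 0 + mono p q" using assms by simp
  then show ?thesis by (rule add_right_imp_eq)
qed

lemma lookup_mult_single_mono:
  "Poly_Mapping.lookup (c * Poly_Mapping.single (mono a b) r) (mono p q) =
     (if mono a b = mono p q then Poly_Mapping.lookup c 0 * r else 0)"
proof -
  have "Poly_Mapping.lookup (c * Poly_Mapping.single (mono a b) r) (mono p q) =
     (\<Sum>l. Poly_Mapping.lookup c l * (r when mono p q = l + mono a b))"
  proof -
    have inner: "\<And>l. (\<Sum>s. ((r when mono a b = s) when mono p q = l + s)) = (r when mono p q = l + mono a b)"
    proof -
      fix l
      have "(\<Sum>s. ((r when mono a b = s) when mono p q = l + s)) = (\<Sum>s. ((r when mono p q = l + s) when mono a b = s))"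
        by (simp add: when_when conj_commute)
      then show "(\<Sum>s. ((r when mono a b = s) when mono p q = l + s)) = (r when mono p q = l + mono a b)" by simp
    qed
    show ?thesis unfolding lookup_mult lookup_single inner ..
  qed
  also have "\<dots> = (\<Sum>l. (Poly_Mapping.lookup c l * r when mono a b = mono p q) when l = 0)"
  proof (rule Sum_any.cong)
    fix l
    show "Poly_Mapping.lookup c l * (r when mono p q = l + mono a b) = ((Poly_Mapping.lookup c l * r when mono a b = mono p q) when l = 0)"
      using mono_deg[of l a b p q] by (auto simp: when_def)
  qed
  also have "\<dots> = (if mono a b = mono p q then Poly_Mapping.lookup c 0 * r else 0)"
    by (simp add: when_def)
  finally show ?thesis .
qed

lemma Var_mult: "(Var a * Var b :: 'k::comm_ring_1 mpoly) = Poly_Mapping.single (mono a b) 1"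
  by (simp add: Var_def mult_single mono_def)


lemma Ax_prod: "(Ax A a b * Ax A c d :: 'k::field mpoly) =
   (if A a b \<and> A c d then Poly_Mapping.single (mono (a,b) (c,d)) 1 else 0)"
  by (simp add: Ax_def Var_mult)

lemma lookup_cg:
  fixes q :: "'k::field mpoly"
  shows "Poly_Mapping.lookup (q * (Ax A a b * Ax A c d - Ax A a d * Ax A c b)) (mono P1 P2) =
    Poly_Mapping.lookup q 0 * ((if A a b \<and> A c d \<and> mono (a,b) (c,d) = mono P1 P2 then 1 else 0)
       - (if A a d \<and> A c b \<and> mono (a,d) (c,b) = mono P1 P2 then 1 else 0))"
  by (simp add: right_diff_distrib Ax_prod lookup_minus lookup_mult_single_mono)

lemma ideal_zero:
  fixes x :: "'k::field mpoly"
  assumes "x \<in> I2 m n A"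
    and "\<And>q a b c d. a < c \<Longrightarrow> b < d \<Longrightarrow>
      \<phi> (q * (Ax A a b * Ax A c d - Ax A a d * Ax A c b)) = (0::'k)"
    and "\<And>(F::'k mpoly set) h. finite F \<Longrightarrow> \<phi> (\<Sum>g\<in>F. h g) = (\<Sum>g\<in>F. \<phi> (h g))"
  shows "\<phi> x = 0"
proof -
  obtain F c where x: "x = (\<Sum>g\<in>F. c g * g)" and F: "finite F" "F \<subseteq> minors2 m n A"
    using assms(1) unfolding I2_def ideal_in_def by blast
  have "\<phi> x = (\<Sum>g\<in>F. \<phi> (c g * g))" using assms(3)[OF F(1), of "\<lambda>g. c g * g"] x by simp
  also have "\<dots> = 0"
  proof (rule sum.neutral, rule ballI)
    fix g assume "g \<in> F"
    then have "g \<in> minors2 m n A" using F by blast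
    then obtain a b c' d where "g = Ax A a b * Ax A c' d - Ax A a d * Ax A c' b" "a < c'" "b < d"
      unfolding minors2_def by blast
    then show "\<phi> (c g * g) = 0" using assms(2) by simp
  qed
  finally show ?thesis .
qed

lemma const_in_kA: "(- 1 :: 'k::field mpoly) \<in> kA m n A" "(1 :: 'k::field mpoly) \<in> kA m n A"
  by (auto simp: kA_def)

theorem lemma4p12:
  fixes A :: "nat \<Rightarrow> nat \<Rightarrow> bool" and m n i j k l :: nat
  assumes "i < m" "k < m" "j < n" "l < n"
      and "A i j" "A k l"
  shows "isolated_pair A i j k l \<longleftrightarrow>
           (Var (i, j) * Var (k, l) :: 'k::field mpoly) \<in> I2 m n A"
proof
  assume iso: "isolated_pair A i j k l"
  then have nA: "\<not> (A i l \<and> A k j)" unfolding isolated_pair_def by blast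
  then have ik: "i \<noteq> k" and jl: "j \<noteq> l" using assms by auto
  have X: "(Var (i, j) * Var (k, l) :: 'k::field mpoly) = Ax A i j * Ax A k l"
    using assms by (simp add: Ax_def)
  have mem: "\<And>(g::'k mpoly) s. g \<in> minors2 m n A \<Longrightarrow> s \<in> kA m n A \<Longrightarrow> (s * g :: 'k mpoly) \<in> I2 m n A"
  proof -
    fix g :: "'k mpoly" and s assume g: "g \<in> minors2 m n A" and s: "s \<in> (kA m n A :: 'k mpoly set)"
    have "\<exists>F c. s * g = (\<Sum>h\<in>F. c h * h) \<and> finite F \<and> F \<subseteq> minors2 m n A \<and> (\<forall>h\<in>F. c h \<in> kA m n A)"
      apply (rule exI[of _ "{g}"])
      apply (rule exI[of _ "\<lambda>_. s"])
      using g s by simp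
    then show "s * g \<in> I2 m n A" unfolding I2_def ideal_in_def by simp
  qed
  consider "i < k" "j < l" | "i < k" "l < j" | "k < i" "j < l" | "k < i" "l < j"
    using ik jl by linarith
  then show "(Var (i, j) * Var (k, l) :: 'k::field mpoly) \<in> I2 m n A"
  proof cases
    case 1
    have g: "Ax A i j * Ax A k l - Ax A i l * Ax A k j \<in> (minors2 m n A :: 'k mpoly set)"
      unfolding minors2_def using 1 assms by blast
    have e: "Ax A i j * Ax A k l - Ax A i l * Ax A k j = (Ax A i j * Ax A k l :: 'k mpoly)"
      using nA by (auto simp: Ax_def)
    have "(1 * (Ax A i j * Ax A k l) :: 'k mpoly) \<in> I2 m n A" using mem[OF g const_in_kA(2)] unfolding e .
    then show ?thesis by (simp only: mult_1_left X)
  next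
    case 2
    have g: "Ax A i l * Ax A k j - Ax A i j * Ax A k l \<in> (minors2 m n A :: 'k mpoly set)"
      unfolding minors2_def using 2 assms by blast
    have e: "Ax A i l * Ax A k j - Ax A i j * Ax A k l = - (Ax A i j * Ax A k l :: 'k mpoly)"
      using nA by (auto simp: Ax_def)
    have "(-1 * (- (Ax A i j * Ax A k l)) :: 'k mpoly) \<in> I2 m n A" using mem[OF g const_in_kA(1)] unfolding e .
    then show ?thesis by (simp only: mult_minus1 minus_minus X)
  next
    case 3
    have g: "Ax A k j * Ax A i l - Ax A k l * Ax A i j \<in> (minors2 m n A :: 'k mpoly set)"
      unfolding minors2_def using 3 assms by blast
    have e: "Ax A k j * Ax A i l - Ax A k l * Ax A i j = - (Ax A i j * Ax A k l :: 'k mpoly)"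
      using nA by (auto simp: Ax_def mult.commute)
    have "(-1 * (- (Ax A i j * Ax A k l)) :: 'k mpoly) \<in> I2 m n A" using mem[OF g const_in_kA(1)] unfolding e .
    then show ?thesis by (simp only: mult_minus1 minus_minus X)
  next
    case 4
    have g: "Ax A k l * Ax A i j - Ax A k j * Ax A i l \<in> (minors2 m n A :: 'k mpoly set)"
      unfolding minors2_def using 4 assms by blast
    have e: "Ax A k l * Ax A i j - Ax A k j * Ax A i l = (Ax A i j * Ax A k l :: 'k mpoly)"
      using nA by (auto simp: Ax_def mult.commute)
    have "(1 * (Ax A i j * Ax A k l) :: 'k mpoly) \<in> I2 m n A" using mem[OF g const_in_kA(2)] unfolding e .
    then show ?thesis by (simp only: mult_1_left X)
  qed
next
  assume x: "(Var (i, j) * Var (k, l) :: 'k::field mpoly) \<in> I2 m n A"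
  show "isolated_pair A i j k l"
  proof (rule ccontr)
    assume "\<not> isolated_pair A i j k l"
    then have il: "A i l" and kj: "A k j" using assms unfolding isolated_pair_def by auto
    have lsum: "\<And>(F::'k mpoly set) (h::'k mpoly \<Rightarrow> 'k mpoly) N. finite F \<Longrightarrow> Poly_Mapping.lookup (\<Sum>g\<in>F. h g) N = (\<Sum>g\<in>F. Poly_Mapping.lookup (h g) N :: 'k)"
      by (simp add: lookup_sum)
    show False
    proof (cases "i = k \<or> j = l")
      case True
      let ?\<phi> = "\<lambda>p::'k mpoly. Poly_Mapping.lookup p (mono (i,j) (k,l))"
      have "?\<phi> (Var (i, j) * Var (k, l)) = 0"
      proof (rule ideal_zero[OF x])
        fix q :: "'k mpoly" and a b c d :: nat
        assume "a < c" "b < d"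
        then show "?\<phi> (q * (Ax A a b * Ax A c d - Ax A a d * Ax A c b)) = 0"
          using True unfolding lookup_cg by (auto simp: mono_eq_iff)
      next
        fix F :: "'k mpoly set" and h :: "'k mpoly \<Rightarrow> 'k mpoly" assume "finite F"
        then show "?\<phi> (\<Sum>g\<in>F. h g) = (\<Sum>g\<in>F. ?\<phi> (h g))" by (rule lsum)
      qed
      then show False by (simp add: Var_mult)
    next
      case False
      let ?\<phi> = "\<lambda>p::'k mpoly. Poly_Mapping.lookup p (mono (i,j) (k,l)) + Poly_Mapping.lookup p (mono (i,l) (k,j))"
      have "?\<phi> (Var (i, j) * Var (k, l)) = 0"
      proof (rule ideal_zero[OF x])
        fix q :: "'k mpoly" and a b c d :: nat
        assume ac: "a < c" and bd: "b < d"
        have P1: "mono (a,b) (c,d) = mono (i,j) (k,l) \<longleftrightarrow> (a=i\<and>b=j\<and>c=k\<and>d=l \<or> a=k\<and>b=l\<and>c=i\<and>d=j)"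
          unfolding mono_eq_iff prod.inject by blast
        have Q1: "mono (a,d) (c,b) = mono (i,l) (k,j) \<longleftrightarrow> (a=i\<and>b=j\<and>c=k\<and>d=l \<or> a=k\<and>b=l\<and>c=i\<and>d=j)"
          unfolding mono_eq_iff prod.inject by blast
        have P2: "mono (a,b) (c,d) = mono (i,l) (k,j) \<longleftrightarrow> (a=i\<and>b=l\<and>c=k\<and>d=j \<or> a=k\<and>b=j\<and>c=i\<and>d=l)"
          unfolding mono_eq_iff prod.inject by blast
        have Q2: "mono (a,d) (c,b) = mono (i,j) (k,l) \<longleftrightarrow> (a=i\<and>b=l\<and>c=k\<and>d=j \<or> a=k\<and>b=j\<and>c=i\<and>d=l)"
          unfolding mono_eq_iff prod.inject by blast
        have A1: "(a=i\<and>b=j\<and>c=k\<and>d=l \<or> a=k\<and>b=l\<and>c=i\<and>d=j) \<Longrightarrow> A a b \<and> A c d \<and> A a d \<and> A c b"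
          using assms(5,6) il kj by auto
        have A2: "(a=i\<and>b=l\<and>c=k\<and>d=j \<or> a=k\<and>b=j\<and>c=i\<and>d=l) \<Longrightarrow> A a b \<and> A c d \<and> A a d \<and> A c b"
          using assms(5,6) il kj by auto
        have e1: "(A a b \<and> A c d \<and> mono (a,b) (c,d) = mono (i,j) (k,l)) =
                  (A a d \<and> A c b \<and> mono (a,d) (c,b) = mono (i,l) (k,j))"
          unfolding P1 Q1 using A1 by blast
        have e2: "(A a b \<and> A c d \<and> mono (a,b) (c,d) = mono (i,l) (k,j)) =
                  (A a d \<and> A c b \<and> mono (a,d) (c,b) = mono (i,j) (k,l))"
          unfolding P2 Q2 using A2 by blast
        show "?\<phi> (q * (Ax A a b * Ax A c d - Ax A a d * Ax A c b)) = 0"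
          unfolding lookup_cg e1 e2 by (simp add: right_diff_distrib)
      next
        fix F :: "'k mpoly set" and h :: "'k mpoly \<Rightarrow> 'k mpoly" assume "finite F"
        then show "?\<phi> (\<Sum>g\<in>F. h g) = (\<Sum>g\<in>F. ?\<phi> (h g))" by (simp add: lsum sum.distrib)
      qed
      then show False using False by (simp add: Var_mult mono_eq_iff lookup_single when_def)
    qed
  qed
qed

end
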